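(* Let $C>0$. There is a constant $C_1>0$ depending only on $C$ such that for any two mostly horizontal inclined to the right lines $l$ and $k$ with different slopes $a$ and $b$, $$N\bigl(s(l,C)\cap s(k,C)\bigr)\leqslant\frac{C_1}{|a-b|}.$$
   Context: For a line $l\subset\mathbb{R}^2$ and $C>0$, the $C$-strip is $s(l,C)=\{r\in\mathbb{R}^2\mid\rho(r,l)\leqslant C/2\}$, $\rho$ the Euclidean distance. A line is mostly horizontal inclined to the right if it has equation $y=ax+b$ with slope $0\leqslant a\leqslant1$. For $D\subseteq\mathbb{R}^2$, the integer cardinality is $N(D)=|\mathbb{Z}^2\cap D|$. *)

theory Defs
  imports "HOL-Analysis.Analysis"
begin

text \<open>Points of the plane are pairs of reals (the product metric on real \<times> real is Euclidean).\<close>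

definition line :: "real \<Rightarrow> real \<Rightarrow> (real \<times> real) set" where
  "line a b = {(x, y). y = a * x + b}"

definition strip :: "(real \<times> real) set \<Rightarrow> real \<Rightarrow> (real \<times> real) set" where
  "strip l C = {r. infdist r l \<le> C / 2}"

definition int_card :: "(real \<times> real) set \<Rightarrow> nat" where
  "int_card D = card {p :: int \<times> int. (real_of_int (fst p), real_of_int (snd p)) \<in> D}"

end

theory Submission
  imports Defs
begin

lemma closed_line: "closed (line a c)"
proof -
  have "line a c = {p. snd p = a * fst p + c}" by (auto simp: line_def)
  moreover have "closed {p::real\<times>real. snd p = a * fst p + c}"
    by (intro closed_Collect_eq continuous_intros)
  ultimately show ?thesis by simp
qed

lemma strip_bound:
  assumes "(x, y) \<in> strip (line a c) C" "0 \<le> a" "a \<le> 1"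
  shows "\<bar>y - a * x - c\<bar> \<le> C"
proof -
  have ne: "line a c \<noteq> {}" by (auto simp: line_def)
  obtain q where q: "q \<in> line a c" "infdist (x,y) (line a c) = dist (x,y) q"
    using infdist_attains_inf[OF closed_line ne] by blast
  obtain u v where uv: "q = (u, v)" "v = a * u + c" using q(1) by (cases q) (auto simp: line_def)
  have dq: "dist (x,y) q \<le> C/2" using assms(1) q(2) by (simp add: strip_def)
  have D: "dist (x,y) q = sqrt ((x-u)^2 + (y-v)^2)"
    using uv by (simp add: dist_Pair_Pair dist_real_def)
  have h1: "\<bar>x-u\<bar> \<le> C/2" proof -
    have "sqrt ((x-u)^2) \<le> sqrt ((x-u)^2 + (y-v)^2)" by (intro real_sqrt_le_mono) simp
    thus ?thesis using dq D real_sqrt_abs[of "x-u"] real_sqrt_abs[of "y-v"] by linarith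
  qed
  have h2: "\<bar>y-v\<bar> \<le> C/2" proof -
    have "sqrt ((y-v)^2) \<le> sqrt ((x-u)^2 + (y-v)^2)" by (intro real_sqrt_le_mono) simp
    thus ?thesis using dq D real_sqrt_abs[of "x-u"] real_sqrt_abs[of "y-v"] by linarith
  qed
  have "\<bar>a*(x-u)\<bar> \<le> \<bar>x-u\<bar>" using assms(2,3)
    by (simp add: abs_mult mult_left_le_one_le)
  moreover have "y - a*x - c = (y - v) - a*(x-u)" using uv by (simp add: algebra_simps)
  ultimately show ?thesis using h1 h2 by linarith
qed

lemma card_int_interval:
  "real (card {k::int. lo \<le> real_of_int k \<and> real_of_int k \<le> hi}) \<le> max 0 (hi - lo + 1)"
proof -
  have "{k::int. lo \<le> real_of_int k \<and> real_of_int k \<le> hi} = {\<lceil>lo\<rceil>..\<lfloor>hi\<rfloor>}"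
    by (auto simp: ceiling_le_iff le_floor_iff)
  moreover have "real (nat (\<lfloor>hi\<rfloor> - \<lceil>lo\<rceil> + 1)) \<le> max 0 (hi - lo + 1)"
    using of_int_floor_le[of hi] le_of_int_ceiling[of lo] by linarith
  ultimately show ?thesis by simp
qed

theorem lemma2:
  fixes C :: real
  assumes "C > 0"
  shows "\<exists>C1 > 0. \<forall>a b c d :: real. 0 \<le> a \<and> a \<le> 1 \<and> 0 \<le> b \<and> b \<le> 1 \<and> a \<noteq> b \<longrightarrow>
           finite {p :: int \<times> int. (real_of_int (fst p), real_of_int (snd p)) \<in> strip (line a c) C \<inter> strip (line b d) C} \<and>
           real (int_card (strip (line a c) C \<inter> strip (line b d) C)) \<le> C1 / \<bar>a - b\<bar>"
proof (rule exI[of _ "(4*C+1)*(2*C+1)"], intro conjI allI impI)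
  show "(4*C+1)*(2*C+1) > 0" using assms by simp
  fix a b c d :: real
  assume H: "0 \<le> a \<and> a \<le> 1 \<and> 0 \<le> b \<and> b \<le> 1 \<and> a \<noteq> b"
  define S where "S = {p :: int \<times> int. (real_of_int (fst p), real_of_int (snd p)) \<in> strip (line a c) C \<inter> strip (line b d) C}"
  define x0 where "x0 = (d - c) / (a - b)"
  define R where "R = 2*C / \<bar>a - b\<bar>"
  define X where "X = {k::int. x0 - R \<le> real_of_int k \<and> real_of_int k \<le> x0 + R}"
  define Y where "Y = (\<lambda>k::int. {m::int. a * k + c - C \<le> real_of_int m \<and> real_of_int m \<le> a * k + c + C})"
  have ab: "\<bar>a - b\<bar> > 0" "\<bar>a - b\<bar> \<le> 1" using H by auto
  have sub: "S \<subseteq> Sigma X Y"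
  proof
    fix p assume "p \<in> S"
    then obtain k m where p: "p = (k, m)"
      "(real_of_int k, real_of_int m) \<in> strip (line a c) C"
      "(real_of_int k, real_of_int m) \<in> strip (line b d) C"
      by (cases p) (auto simp: S_def)
    have e1: "\<bar>m - a*k - c\<bar> \<le> C" using strip_bound[OF p(2)] H by simp
    have e2: "\<bar>m - b*k - d\<bar> \<le> C" using strip_bound[OF p(3)] H by simp
    have "(a-b)*k + (c-d) = (m - b*k - d) - (m - a*k - c)" by (simp add: algebra_simps)
    hence "\<bar>(a-b)*k + (c-d)\<bar> \<le> 2*C" using e1 e2 by linarith
    moreover have "(a-b)*k + (c-d) = (a-b)*(k - x0)" using H by (simp add: x0_def field_simps)
    ultimately have "\<bar>a-b\<bar> * \<bar>k - x0\<bar> \<le> 2*C" by (simp add: abs_mult)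
    hence "\<bar>k - x0\<bar> \<le> R" using ab by (simp add: R_def field_simps mult.commute)
    hence "k \<in> X" unfolding X_def by (simp add: abs_le_iff)
    moreover have "m \<in> Y k" using e1 unfolding Y_def by (simp add: abs_le_iff)
    ultimately show "p \<in> Sigma X Y" using p(1) by simp
  qed
  have finX: "finite X"
  proof -
    have "X = {\<lceil>x0 - R\<rceil>..\<lfloor>x0 + R\<rfloor>}" by (auto simp: X_def ceiling_le_iff le_floor_iff)
    thus ?thesis by simp
  qed
  have finY: "finite (Y k)" for k
  proof -
    have "Y k = {\<lceil>a * k + c - C\<rceil>..\<lfloor>a * k + c + C\<rfloor>}" by (auto simp: Y_def ceiling_le_iff le_floor_iff)
    thus ?thesis by simp
  qed
  have finS: "finite S" using sub finX finY by (meson finite_SigmaI finite_subset)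
  have "card S \<le> card (Sigma X Y)" using sub finX finY by (intro card_mono) auto
  also have "\<dots> = (\<Sum>k\<in>X. card (Y k))" using finX finY by simp
  finally have "real (card S) \<le> (\<Sum>k\<in>X. real (card (Y k)))" by (metis of_nat_le_iff of_nat_sum)
  also have "\<dots> \<le> (\<Sum>k\<in>X. 2*C+1)"
  proof (rule sum_mono)
    fix k assume "k \<in> X"
    show "real (card (Y k)) \<le> 2*C+1" using card_int_interval[of "a*k+c-C" "a*k+c+C"] assms
      by (simp add: Y_def)
  qed
  also have "\<dots> = real (card X) * (2*C+1)" by simp
  also have "\<dots> \<le> (2*R+1) * (2*C+1)"
  proof -
    have "real (card X) \<le> max 0 (2*R+1)" using card_int_interval[of "x0-R" "x0+R"] by (simp add: X_def)
    moreover have "R \<ge> 0" using assms ab by (simp add: R_def)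
    ultimately show ?thesis using assms by (intro mult_right_mono) auto
  qed
  also have "\<dots> \<le> (4*C+1)*(2*C+1) / \<bar>a-b\<bar>"
  proof -
    have "1 \<le> 1 / \<bar>a-b\<bar>" using ab by simp
    hence "2*R+1 \<le> (4*C+1) / \<bar>a-b\<bar>" by (simp add: R_def add_divide_distrib)
    hence "(2*R+1)*(2*C+1) \<le> ((4*C+1) / \<bar>a-b\<bar>)*(2*C+1)" using assms by (intro mult_right_mono) auto
    thus ?thesis by simp
  qed
  finally show "real (int_card (strip (line a c) C \<inter> strip (line b d) C)) \<le> (4*C+1)*(2*C+1) / \<bar>a - b\<bar>"
    by (simp add: int_card_def S_def)
  show "finite {p :: int \<times> int. (real_of_int (fst p), real_of_int (snd p)) \<in> strip (line a c) C \<inter> strip (line b d) C}"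
    using finS by (simp add: S_def)
qed

end
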